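(* Assume (H$_G$). Let $\alpha\in U$ and $\xi>0$, and set $\gamma=\alpha^{\nu-1}/\xi$. For each integer $d\ge\nu-1$ define the partial sum $$\mathcal G^{(d)}:=\alpha\sum_{j=0}^{\lfloor\frac{d-\nu+1}{2\nu}\rfloor}\ \sum_{i=\nu-1}^{d-2j\nu}\frac{a_{i,j,\nu}(\gamma)}{n^{2j+i/\nu}}.$$ Then for every $d\ge\nu-1$ there is a constant $K_{3,d}(\alpha,\gamma)$ such that, for all sufficiently large $n$, $$\Big|x_{n,\frac n\alpha,\frac{n^{\nu-1}}{\xi}}-\mathcal G^{(d)}\Big|<\frac{K_{3,d}(\alpha,\gamma)}{n^{(d+1)/\nu}}.$$
   Context: Fix an integer $\nu\ge2$. For $N,r>0$ let $w_{N,r}(\lambda)=\exp[-N(\lambda^2/2+r\lambda^{2\nu}/(2\nu))]$, and let $x_{n,N,r}=b_n^2$ be the recurrence coefficients of the monic orthogonal polynomials: $\lambda\pi_n=\pi_{n+1}+b_n^2\pi_{n-1}$. Let $c_\nu=\binom{2\nu-1}{\nu-1}$. For $y\ge0$ let $Z_0(y)$ be the unique root in $(0,1]$ of $1=Z+c_\nu yZ^\nu$. For $g\ge1$ set $$Z_g(y)=\frac{Z_0(y)(Z_0(y)-1)P_{3g-2,\nu}(Z_0(y))}{(\nu-(\nu-1)Z_0(y))^{5g-1}},$$ where the $P_{3g-2,\nu}$ are fixed real polynomials of degree $3g-2$. For fixed $\gamma>0$, $Z_g(\gamma n^{\nu-1})$ has a convergent expansion for large $n$ of the form $$Z_g(\gamma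 n^{\nu-1})=\sum_{i\ge\nu-1}a_{i,g,\nu}(\gamma)\,n^{-i/\nu};$$ this defines the coefficients $a_{i,g,\nu}(\gamma)$. Hypothesis (H$_G$): there is a neighborhood $U$ of $1$ such that for each $\alpha\in U$ and each integer $m\ge0$ there exist $K_{1,m}(\alpha)$ and $n_0$ such that, for all $n\ge n_0$ and all $r>0$, $$\Big|x_{n,n/\alpha,r}-\alpha\sum_{g=0}^m\frac{Z_g(\alpha^{\nu-1}r)}{n^{2g}}\Big|<\frac{K_{1,m}(\alpha)}{n^{2m+2}}.$$ *)

theory Defs
  imports "HOL-Analysis.Analysis" "HOL-Computational_Algebra.Polynomial"
begin

definition wgt :: "nat \<Rightarrow> real \<Rightarrow> real \<Rightarrow> real \<Rightarrow> real" where
  "wgt \<nu> N r t = exp (- N * (t^2 / 2 + r * t^(2*\<nu>) / (2 * real \<nu>)))"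

definition monic_OPs :: "nat \<Rightarrow> real \<Rightarrow> real \<Rightarrow> (nat \<Rightarrow> real poly) \<Rightarrow> bool" where
  "monic_OPs \<nu> N r \<pi> \<longleftrightarrow>
     (\<forall>k. degree (\<pi> k) = k \<and> lead_coeff (\<pi> k) = 1 \<and>
          (\<forall>j<k. (LINT t|lborel. poly (\<pi> k) t * t^j * wgt \<nu> N r t) = 0))"

definition xrec :: "nat \<Rightarrow> nat \<Rightarrow> real \<Rightarrow> real \<Rightarrow> real" where
  "xrec \<nu> n N r = (THE c. \<exists>\<pi>. monic_OPs \<nu> N r \<pi> \<and>
       [:0, 1:] * \<pi> n = \<pi> (Suc n) + smult c (\<pi> (n - 1)))"

definition cnu :: "nat \<Rightarrow> real" where
  "cnu \<nu> = real ((2*\<nu> - 1) choose (\<nu> - 1))"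

definition Z0 :: "nat \<Rightarrow> real \<Rightarrow> real" where
  "Z0 \<nu> y = (THE Z. 0 < Z \<and> Z \<le> 1 \<and> 1 = Z + cnu \<nu> * y * Z^\<nu>)"

text \<open>Z_g, with the fixed polynomials P g = P_{3g-2,nu} as a parameter.\<close>
definition Zg :: "(nat \<Rightarrow> real poly) \<Rightarrow> nat \<Rightarrow> nat \<Rightarrow> real \<Rightarrow> real" where
  "Zg P \<nu> g y = (if g = 0 then Z0 \<nu> y else
     Z0 \<nu> y * (Z0 \<nu> y - 1) * poly (P g) (Z0 \<nu> y) /
       (real \<nu> - (real \<nu> - 1) * Z0 \<nu> y) ^ (5*g - 1))"

definition acoef :: "(nat \<Rightarrow> real poly) \<Rightarrow> nat \<Rightarrow> nat \<Rightarrow> real \<Rightarrow> nat \<Rightarrow> real" where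
  "acoef P \<nu> g \<gamma> = (THE a. (\<forall>i<\<nu> - 1. a i = 0) \<and>
     (\<exists>n0. \<forall>n::nat\<ge>n0.
        (\<lambda>i. a i * real n powr (- (real i / real \<nu>))) sums Zg P \<nu> g (\<gamma> * real n ^ (\<nu> - 1))))"

definition Gpart :: "(nat \<Rightarrow> real poly) \<Rightarrow> nat \<Rightarrow> real \<Rightarrow> real \<Rightarrow> nat \<Rightarrow> nat \<Rightarrow> real" where
  "Gpart P \<nu> \<alpha> \<gamma> d n = \<alpha> * (\<Sum>j = 0..(d + 1 - \<nu>) div (2*\<nu>).
      \<Sum>i = \<nu> - 1..d - 2*j*\<nu>. acoef P \<nu> j \<gamma> i / real n powr (real (2*j) + real i / real \<nu>))"

end

theory Submission
  imports Defs "HOL-Complex_Analysis.Complex_Analysis"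
begin


lemma cnu_pos: "cnu \<nu> > 0"
  unfolding cnu_def by simp

lemma Z0_prop:
  assumes "\<nu> \<ge> 1" "y \<ge> 0"
  shows "0 < Z0 \<nu> y \<and> Z0 \<nu> y \<le> 1 \<and> 1 = Z0 \<nu> y + cnu \<nu> * y * Z0 \<nu> y ^ \<nu>"
proof -
  let ?c = "cnu \<nu> * y"
  have c: "?c \<ge> 0" using cnu_pos[of \<nu>] assms by simp
  let ?f = "\<lambda>Z::real. Z + ?c * Z^\<nu>"
  have cont: "continuous_on {0..1} ?f" by (intro continuous_intros)
  have f0: "?f 0 \<le> 1" using assms by (simp add: zero_power)
  have f1: "1 \<le> ?f 1" using c by simp
  have "\<exists>Z. 0 \<le> Z \<and> Z \<le> 1 \<and> ?f Z = 1"
    by (rule IVT'[OF f0 f1 _ cont]) simp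
  then obtain Z where Z: "0 \<le> Z" "Z \<le> 1" "?f Z = 1" by blast
  have Zp: "Z > 0" using Z assms by (cases "Z = 0") (auto simp: zero_power)
  have uniq: "Z' = Z" if "0 < Z'" "Z' \<le> 1" "1 = Z' + cnu \<nu> * y * Z'^\<nu>" for Z'
  proof (rule ccontr)
    assume "Z' \<noteq> Z"
    then consider "Z' < Z" | "Z < Z'" by linarith
    then show False
    proof cases
      case 1
      have "Z'^\<nu> \<le> Z^\<nu>" using 1 that by (intro power_mono) auto
      hence "?c * Z'^\<nu> \<le> ?c * Z^\<nu>" using c by (intro mult_left_mono) auto
      then show False using 1 that Z by linarith
    next
      case 2
      have "Z^\<nu> \<le> Z'^\<nu>" using 2 Zp by (intro power_mono) auto
      hence "?c * Z^\<nu> \<le> ?c * Z'^\<nu>" using c by (intro mult_left_mono) auto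
      then show False using 2 that Z by linarith
    qed
  qed
  have "Z0 \<nu> y = Z" unfolding Z0_def
  proof (rule the_equality)
    show "0 < Z \<and> Z \<le> 1 \<and> 1 = Z + cnu \<nu> * y * Z^\<nu>" using Z Zp by simp
    fix Z' assume "0 < Z' \<and> Z' \<le> 1 \<and> 1 = Z' + cnu \<nu> * y * Z'^\<nu>"
    then show "Z' = Z" using uniq by blast
  qed
  then show ?thesis using Z Zp by simp
qed



lemma inv_exists:
  assumes "\<nu> \<ge> 2"
  obtains r \<rho> g where "r > 0" "\<rho> > 0" "g holomorphic_on ball 0 \<rho>"
    "\<And>w. w \<in> ball 1 r \<Longrightarrow> g ((1 - w^\<nu>) / w) = w"
proof -
  define f where "f = (\<lambda>w::complex. (1 - w^\<nu>) / w)"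
  define S0 where "S0 = ball (1::complex) (1/2)"
  have nz: "w \<noteq> 0" if "w \<in> S0" for w
    using that by (auto simp: S0_def dist_norm)
  have holf: "f holomorphic_on S0"
    unfolding f_def using nz by (auto intro!: holomorphic_intros)
  have "(f has_field_derivative ((0 - of_nat \<nu> * (1 * 1 ^ (\<nu> - Suc 0))) * 1 - (1 - 1 ^ \<nu>) * 1) / (1 * 1)) (at 1)"
    unfolding f_def
    apply (rule DERIV_divide)
      apply (rule DERIV_diff)
       apply (rule DERIV_const)
      apply (rule DERIV_power)
      apply (rule DERIV_ident)
     apply (rule DERIV_ident)
    apply simp
    done
  then have df: "deriv f 1 = ((0 - of_nat \<nu> * (1 * 1 ^ (\<nu> - Suc 0))) * 1 - (1 - 1 ^ \<nu>) * 1) / (1 * 1)"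
    by (rule DERIV_imp_deriv)
  have "deriv f 1 \<noteq> 0" using df assms by simp
  then obtain r where r: "r > 0" "ball 1 r \<subseteq> S0" "open (f ` ball 1 r)" "inj_on f (ball 1 r)"
    using has_complex_derivative_locally_invertible[OF holf _ _] by (metis S0_def centre_in_ball open_ball half_gt_zero zero_less_one)
  have holf': "f holomorphic_on ball 1 r" using holf r(2) holomorphic_on_subset by blast
  obtain g where g: "g holomorphic_on (f ` ball 1 r)" "\<And>z. z \<in> ball 1 r \<Longrightarrow> g (f z) = z"
    using holomorphic_has_inverse[OF holf' open_ball r(4)] by metis
  have "f 1 = 0" by (simp add: f_def)
  then have "0 \<in> f ` ball 1 r" using r(1) by (metis centre_in_ball imageI)
  then obtain \<rho> where \<rho>: "\<rho> > 0" "ball 0 \<rho> \<subseteq> f ` ball 1 r"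
    using r(3) open_contains_ball by blast
  show ?thesis
    by (rule that[of r \<rho> g]) (use r \<rho> g holomorphic_on_subset in \<open>auto simp: f_def\<close>)
qed



definition tt :: "nat \<Rightarrow> nat \<Rightarrow> real" where "tt \<nu> n = real n powr (-1/real \<nu>)"

lemma tt_tendsto: "\<nu> \<ge> 1 \<Longrightarrow> tt \<nu> \<longlonglongrightarrow> 0"
  unfolding tt_def by (intro tendsto_neg_powr filterlim_real_sequentially) auto

lemma powr_tt: "n > 0 \<Longrightarrow> real n powr (-(real i / real \<nu>)) = tt \<nu> n ^ i"
  unfolding tt_def by (subst powr_power) auto

lemma tt_pos: "n > 0 \<Longrightarrow> tt \<nu> n > 0"
  unfolding tt_def by simp

lemma tt_mono: "0 < m \<Longrightarrow> m \<le> n \<Longrightarrow> tt \<nu> n \<le> tt \<nu> m"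
  unfolding tt_def by (rule powr_mono2') auto

lemma tail_bound:
  fixes a :: "nat \<Rightarrow> real"
  assumes sm: "summable (\<lambda>i. \<bar>a i\<bar> * s^i)" and s: "s > 0" and t: "0 \<le> t" "t \<le> s"
  shows "\<bar>(\<Sum>i. a i * t^i) - (\<Sum>i\<le>D. a i * t^i)\<bar> \<le> t^(Suc D) * ((\<Sum>i. \<bar>a i\<bar> * s^i) / s^(Suc D))"
proof -
  let ?k = "Suc D"
  have le: "\<bar>a i * t^i\<bar> \<le> \<bar>a i\<bar> * s^i" for i
    using t by (auto simp: abs_mult intro!: mult_left_mono power_mono)
  have sa: "summable (\<lambda>i. a i * t^i)"
    by (rule summable_comparison_test[OF _ sm]) (use le in auto)
  have sabs: "summable (\<lambda>i. \<bar>a i * t^i\<bar>)"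
    by (rule summable_comparison_test[OF _ sm]) (use le in auto)
  have "(\<Sum>i. a i * t^i) = (\<Sum>i. a (i + ?k) * t^(i + ?k)) + (\<Sum>i<?k. a i * t^i)"
    by (rule suminf_split_initial_segment[OF sa])
  then have eq: "(\<Sum>i. a i * t^i) - (\<Sum>i\<le>D. a i * t^i) = (\<Sum>i. a (i + ?k) * t^(i + ?k))"
    by (simp add: lessThan_Suc_atMost)
  have s1: "summable (\<lambda>i. \<bar>a (i + ?k) * t^(i + ?k)\<bar>)"
    using summable_ignore_initial_segment[OF sabs, of ?k] by simp
  have s2: "summable (\<lambda>i. \<bar>a (i + ?k)\<bar> * s^(i + ?k))"
    using summable_ignore_initial_segment[OF sm, of ?k] by simp
  have "\<bar>\<Sum>i. a (i + ?k) * t^(i + ?k)\<bar> \<le> (\<Sum>i. \<bar>a (i + ?k) * t^(i + ?k)\<bar>)"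
    by (rule summable_rabs[OF s1])
  also have "\<dots> \<le> (\<Sum>i. t^?k * (\<bar>a (i + ?k)\<bar> * s^(i + ?k)) / s^?k)"
  proof (rule suminf_le)
    show "summable (\<lambda>i. t^?k * (\<bar>a (i + ?k)\<bar> * s^(i + ?k)) / s^?k)"
      using s2 by (intro summable_divide summable_mult)
    show "\<bar>a (n + ?k) * t^(n + ?k)\<bar> \<le> t^?k * (\<bar>a (n + ?k)\<bar> * s^(n + ?k)) / s^?k" for n
    proof -
      have "t^n \<le> s^n" using t by (intro power_mono) auto
      hence "\<bar>a (n + ?k)\<bar> * (t^?k * t^n) \<le> \<bar>a (n + ?k)\<bar> * (t^?k * s^n)"
        using t by (intro mult_left_mono) auto
      thus ?thesis using s t by (simp add: abs_mult power_add field_simps)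
    qed
  qed (use s1 in auto)
  also have "\<dots> = (\<Sum>i. t^?k * (\<bar>a (i + ?k)\<bar> * s^(i + ?k))) / s^?k"
    by (rule suminf_divide) (rule summable_mult[OF s2])
  also have "\<dots> = t^?k * (\<Sum>i. \<bar>a (i + ?k)\<bar> * s^(i + ?k)) / s^?k"
    by (subst suminf_mult[OF s2]) simp
  also have "\<dots> \<le> t^?k * (\<Sum>i. \<bar>a i\<bar> * s^i) / s^?k"
  proof -
    have "(\<Sum>i. \<bar>a i\<bar> * s^i) = (\<Sum>i. \<bar>a (i + ?k)\<bar> * s^(i + ?k)) + (\<Sum>i<?k. \<bar>a i\<bar> * s^i)"
      by (rule suminf_split_initial_segment[OF sm])
    moreover have "(\<Sum>i<?k. \<bar>a i\<bar> * s^i) \<ge> 0" using s by (intro sum_nonneg) auto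
    ultimately have "(\<Sum>i. \<bar>a (i + ?k)\<bar> * s^(i + ?k)) \<le> (\<Sum>i. \<bar>a i\<bar> * s^i)" by linarith
    thus ?thesis using s t by (intro divide_right_mono mult_left_mono) auto
  qed
  finally show ?thesis using eq by simp
qed

lemma ser_prop:
  fixes a :: "nat \<Rightarrow> real"
  assumes "\<nu> \<ge> 1" and sm: "\<forall>n\<ge>n0. (\<lambda>i. a i * real n powr (-(real i / real \<nu>))) sums F n"
  shows "\<exists>s>0. \<exists>n1>0. summable (\<lambda>i. \<bar>a i\<bar> * s^i) \<and>
           (\<forall>n\<ge>n1. 0 < tt \<nu> n \<and> tt \<nu> n \<le> s \<and> (\<lambda>i. a i * tt \<nu> n ^ i) sums F n)"
proof -
  define m where "m = max n0 1"
  define n1 where "n1 = Suc m"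
  have m: "m > 0" "m \<ge> n0" by (auto simp: m_def)
  have sums_n: "(\<lambda>i. a i * tt \<nu> n ^ i) sums F n" if "n \<ge> m" for n
  proof -
    have "n > 0" using that m by auto
    then have "(\<lambda>i. a i * real n powr (-(real i / real \<nu>))) = (\<lambda>i. a i * tt \<nu> n ^ i)"
      by (simp add: powr_tt)
    then show ?thesis using sm that m by (metis order_trans)
  qed
  have "summable (\<lambda>i. a i * tt \<nu> m ^ i)" using sums_n[of m] sums_summable by auto
  moreover have lt: "norm (tt \<nu> n1) < norm (tt \<nu> m)"
  proof -
    have "tt \<nu> n1 < tt \<nu> m" unfolding tt_def n1_def
      by (rule powr_less_mono2_neg) (use m assms in auto)
    moreover have "tt \<nu> n1 > 0" using tt_pos[of n1] n1_def by simp
    ultimately show ?thesis by simp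
  qed
  ultimately have "summable (\<lambda>i. norm (a i * tt \<nu> n1 ^ i))" by (rule powser_insidea)
  moreover have "tt \<nu> n1 > 0" using tt_pos[of n1] n1_def by simp
  ultimately have S: "summable (\<lambda>i. \<bar>a i\<bar> * tt \<nu> n1 ^ i)"
    by (simp add: abs_mult)
  show ?thesis
  proof (intro exI conjI allI impI)
    show "tt \<nu> n1 > 0" using tt_pos[of n1] n1_def by simp
    show "n1 > 0" by (simp add: n1_def)
    show "summable (\<lambda>i. \<bar>a i\<bar> * tt \<nu> n1 ^ i)" by (rule S)
    fix n assume n: "n \<ge> n1"
    show "0 < tt \<nu> n" using n n1_def by (intro tt_pos) auto
    show "tt \<nu> n \<le> tt \<nu> n1" using n n1_def by (intro tt_mono) auto
    show "(\<lambda>i. a i * tt \<nu> n ^ i) sums F n" using n n1_def by (intro sums_n) auto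
  qed
qed



lemma coef_unique:
  fixes a b :: "nat \<Rightarrow> real"
  assumes nu: "\<nu> \<ge> 1"
    and A: "\<forall>n\<ge>n0. (\<lambda>i. a i * real n powr (-(real i / real \<nu>))) sums F n"
    and B: "\<forall>n\<ge>n0'. (\<lambda>i. b i * real n powr (-(real i / real \<nu>))) sums F n"
  shows "a = b"
proof -
  define c where "c = (\<lambda>i. a i - b i)"
  have C: "\<forall>n\<ge>max n0 n0'. (\<lambda>i. c i * real n powr (-(real i / real \<nu>))) sums (\<lambda>_. 0::real) n"
  proof (intro allI impI)
    fix n assume "n \<ge> max n0 n0'"
    then have "(\<lambda>i. a i * real n powr (-(real i / real \<nu>)) - b i * real n powr (-(real i / real \<nu>))) sums (F n - F n)"
      using A B by (intro sums_diff) auto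
    then show "(\<lambda>i. c i * real n powr (-(real i / real \<nu>))) sums (\<lambda>_. 0::real) n"
      by (simp add: c_def left_diff_distrib)
  qed
  obtain s n1 where s: "s > 0" "n1 > 0" and S: "summable (\<lambda>i. \<bar>c i\<bar> * s^i)"
    and N: "\<forall>n\<ge>n1. 0 < tt \<nu> n \<and> tt \<nu> n \<le> s \<and> (\<lambda>i. c i * tt \<nu> n ^ i) sums 0"
    using ser_prop[OF nu C] by blast
  define M where "M = (\<Sum>i. \<bar>c i\<bar> * s^i)"
  have M0: "M \<ge> 0" unfolding M_def using S s by (intro suminf_nonneg) auto
  have ck: "c k = 0" for k
  proof (induction k rule: less_induct)
    case (less k)
    have bnd: "\<bar>c k\<bar> \<le> tt \<nu> n * (M / s^Suc k)" if "n \<ge> n1" for n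
    proof -
      let ?t = "tt \<nu> n"
      have t: "0 < ?t" "?t \<le> s" and sm: "(\<lambda>i. c i * ?t ^ i) sums 0" using N that by auto
      have "\<bar>(\<Sum>i. c i * ?t^i) - (\<Sum>i\<le>k. c i * ?t^i)\<bar> \<le> ?t^(Suc k) * (M / s^(Suc k))"
        unfolding M_def by (rule tail_bound[OF S s(1)]) (use t in auto)
      moreover have "(\<Sum>i. c i * ?t^i) = 0" using sm sums_unique by metis
      moreover have "(\<Sum>i\<le>k. c i * ?t^i) = c k * ?t^k"
      proof -
        have "(\<Sum>i\<le>k. c i * ?t^i) = (\<Sum>i<k. c i * ?t^i) + c k * ?t^k"
          by (simp add: lessThan_Suc_atMost[symmetric])
        also have "(\<Sum>i<k. c i * ?t^i) = 0" using less by simp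
        finally show ?thesis by simp
      qed
      ultimately have "\<bar>c k\<bar> * ?t^k \<le> ?t * ?t^k * (M / s^(Suc k))"
        using t by (simp add: abs_mult)
      then have "?t^k * \<bar>c k\<bar> \<le> ?t^k * (?t * (M / s^(Suc k)))" by (simp add: algebra_simps)
      moreover have "?t^k > 0" using t by simp
      ultimately show ?thesis using mult_le_cancel_left_pos by blast
    qed
    show ?case
    proof (rule ccontr)
      assume ne: "c k \<noteq> 0"
      define L where "L = M / s^Suc k"
      have L0: "L \<ge> 0" using M0 s by (simp add: L_def)
      have "eventually (\<lambda>n. tt \<nu> n < \<bar>c k\<bar> / (L + 1)) sequentially"
        using tt_tendsto[OF nu] ne L0 by (intro order_tendstoD(2)) auto
      then obtain N0 where N0: "\<forall>n\<ge>N0. tt \<nu> n < \<bar>c k\<bar> / (L + 1)"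
        by (auto simp: eventually_sequentially)
      define n where "n = max N0 n1"
      have "\<bar>c k\<bar> \<le> tt \<nu> n * L" using bnd[of n] by (simp add: n_def L_def)
      also have "\<dots> \<le> tt \<nu> n * (L + 1)" using N[rule_format, of n] by (simp add: n_def)
      also have "\<dots> < \<bar>c k\<bar>"
        using N0[rule_format, of n] L0 by (simp add: n_def field_simps)
      finally show False by simp
    qed
  qed
  show ?thesis using ck by (auto simp: c_def fun_eq_iff)
qed

lemma coef_bound:
  fixes a :: "nat \<Rightarrow> real"
  assumes nu: "\<nu> \<ge> 1"
    and A: "\<forall>n\<ge>n0. (\<lambda>i. a i * real n powr (-(real i / real \<nu>))) sums F n"
  shows "\<exists>C n2. \<forall>n\<ge>n2. \<bar>F n - (\<Sum>i\<le>D. a i * tt \<nu> n ^ i)\<bar> \<le> C * tt \<nu> n ^ Suc D"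
proof -
  obtain s n1 where s: "s > 0" "n1 > 0" and S: "summable (\<lambda>i. \<bar>a i\<bar> * s^i)"
    and N: "\<forall>n\<ge>n1. 0 < tt \<nu> n \<and> tt \<nu> n \<le> s \<and> (\<lambda>i. a i * tt \<nu> n ^ i) sums F n"
    using ser_prop[OF nu A] by blast
  show ?thesis
  proof (intro exI allI impI)
    fix n assume n: "n \<ge> n1"
    have t: "0 < tt \<nu> n" "tt \<nu> n \<le> s" and sm: "(\<lambda>i. a i * tt \<nu> n ^ i) sums F n" using N n by auto
    have "\<bar>(\<Sum>i. a i * tt \<nu> n^i) - (\<Sum>i\<le>D. a i * tt \<nu> n^i)\<bar> \<le> tt \<nu> n^(Suc D) * ((\<Sum>i. \<bar>a i\<bar> * s^i) / s^(Suc D))"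
      by (rule tail_bound[OF S s(1)]) (use t in auto)
    moreover have "(\<Sum>i. a i * tt \<nu> n^i) = F n" using sm sums_unique by metis
    ultimately show "\<bar>F n - (\<Sum>i\<le>D. a i * tt \<nu> n ^ i)\<bar> \<le> ((\<Sum>i. \<bar>a i\<bar> * s^i) / s^(Suc D)) * tt \<nu> n ^ Suc D"
      by (simp add: mult.commute)
  qed
qed

lemma acoef_eq:
  assumes nu: "\<nu> \<ge> 1"
    and z: "\<forall>i<\<nu> - 1. a i = 0"
    and A: "\<forall>n\<ge>n0. (\<lambda>i. a i * real n powr (- (real i / real \<nu>))) sums Zg P \<nu> g (\<gamma> * real n ^ (\<nu> - 1))"
  shows "acoef P \<nu> g \<gamma> = a"
  unfolding acoef_def
proof (rule the_equality)
  show "(\<forall>i<\<nu> - 1. a i = 0) \<and> (\<exists>n0. \<forall>n\<ge>n0. (\<lambda>i. a i * real n powr - (real i / real \<nu>)) sums Zg P \<nu> g (\<gamma> * real n ^ (\<nu> - 1)))"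
    using z A by blast
  fix b assume "(\<forall>i<\<nu> - 1. b i = 0) \<and> (\<exists>n0. \<forall>n\<ge>n0. (\<lambda>i. b i * real n powr - (real i / real \<nu>)) sums Zg P \<nu> g (\<gamma> * real n ^ (\<nu> - 1)))"
  then obtain n0' where B: "\<forall>n\<ge>n0'. (\<lambda>i. b i * real n powr - (real i / real \<nu>)) sums Zg P \<nu> g (\<gamma> * real n ^ (\<nu> - 1))" by blast
  show "b = a" by (rule coef_unique[OF nu B A])
qed



definition ZgC :: "(nat \<Rightarrow> real poly) \<Rightarrow> nat \<Rightarrow> nat \<Rightarrow> complex \<Rightarrow> complex" where
  "ZgC P \<nu> G z = (if G = 0 then z else z * (z - 1) * poly (map_poly of_real (P G)) z /
       (of_nat \<nu> - (of_nat \<nu> - 1) * z) ^ (5*G - 1))"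

lemma poly_of_real: "poly (map_poly of_real p) (of_real x) = (of_real (poly p x) :: complex)"
  by (induction p) (auto simp: map_poly_pCons)

lemma ZgC_real: "ZgC P \<nu> G (complex_of_real (Z0 \<nu> y)) = complex_of_real (Zg P \<nu> G y)"
  unfolding ZgC_def Zg_def by (simp add: poly_of_real)

lemma ZgC_holo:
  assumes "\<nu> \<ge> 2"
  shows "ZgC P \<nu> G holomorphic_on ball 0 1"
proof (cases "G = 0")
  case True
  then have "ZgC P \<nu> G = (\<lambda>z. z)" by (auto simp: ZgC_def fun_eq_iff)
  then show ?thesis by (simp add: holomorphic_on_ident)
next
  case False
  have nz: "of_nat \<nu> - (of_nat \<nu> - 1) * z \<noteq> (0::complex)" if "z \<in> ball 0 1" for z
  proof
    assume "of_nat \<nu> - (of_nat \<nu> - 1) * z = (0::complex)"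
    then have "z = of_nat \<nu> / (of_nat \<nu> - 1)" using assms
      by (simp add: field_simps)
    then have "norm z = real \<nu> / (real \<nu> - 1)" using assms
      by (simp add: norm_divide) (metis norm_of_nat of_nat_1 of_nat_diff one_le_numeral order_trans)
    moreover have "real \<nu> / (real \<nu> - 1) \<ge> 1" using assms by (simp add: field_simps)
    ultimately show False using that by simp
  qed
  show ?thesis using False nz unfolding ZgC_def
    by (auto intro!: holomorphic_intros)
qed



lemma eps_identity:
  assumes nu: "\<nu> \<ge> 2" and g: "\<gamma> > 0" and n: "n > 0"
  shows "cnu \<nu> * (\<gamma> * real n ^ (\<nu> - 1)) * ((cnu \<nu> * \<gamma>) powr (-1/real \<nu>) * tt \<nu> n ^ (\<nu> - 1)) ^ \<nu> = 1"
proof -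
  define c where "c = cnu \<nu> * \<gamma>"
  have c: "c > 0" using cnu_pos[of \<nu>] g by (simp add: c_def)
  have k: "(c powr (-1/real \<nu>)) ^ \<nu> = 1 / c"
    using c nu by (subst powr_power) (auto simp: powr_minus_divide)
  have t: "tt \<nu> n ^ \<nu> = 1 / real n"
    unfolding tt_def using n nu by (subst powr_power) (auto simp: powr_minus_divide)
  have "(c powr (-1/real \<nu>) * tt \<nu> n ^ (\<nu> - 1)) ^ \<nu> = (c powr (-1/real \<nu>)) ^ \<nu> * (tt \<nu> n ^ (\<nu> - 1)) ^ \<nu>"
    by (rule power_mult_distrib)
  also have "\<dots> = (1/c) * (tt \<nu> n ^ \<nu>) ^ (\<nu> - 1)"
    by (simp only: k) (simp add: power_mult[symmetric] mult.commute)
  also have "\<dots> = (1/c) * (1 / real n ^ (\<nu> - 1))" by (simp add: t power_one_over)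
  finally have "(c powr (-1/real \<nu>) * tt \<nu> n ^ (\<nu> - 1)) ^ \<nu> = (1/c) * (1 / real n ^ (\<nu> - 1))" .
  then show ?thesis using c n g cnu_pos[of \<nu>] by (simp add: c_def field_simps)
qed



lemma coef_exist:
  assumes nu: "\<nu> \<ge> 2" and gp: "\<gamma> > 0"
  shows "\<exists>a. (\<forall>i<\<nu> - 1. a i = 0) \<and>
     (\<exists>n0. \<forall>n\<ge>n0. (\<lambda>i. a i * real n powr (- (real i / real \<nu>))) sums Zg P \<nu> G (\<gamma> * real n ^ (\<nu> - 1)))"
proof -
  obtain r \<rho> g where r: "r > 0" and \<rho>: "\<rho> > 0" and holg: "g holomorphic_on ball 0 \<rho>"
    and ginv: "\<And>w. w \<in> ball 1 r \<Longrightarrow> g ((1 - w^\<nu>) / w) = w"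
    using inv_exists[OF nu] by blast
  define h where "h = (\<lambda>e. e * g e)"
  have holh: "h holomorphic_on ball 0 \<rho>" unfolding h_def using holg by (auto intro!: holomorphic_intros)
  have "continuous_on (ball 0 \<rho>) h" using holh holomorphic_on_imp_continuous_on by blast
  then obtain \<delta>0 where \<delta>0: "\<delta>0 > 0" "\<forall>x'\<in>ball 0 \<rho>. dist x' 0 < \<delta>0 \<longrightarrow> dist (h x') (h 0) < 1"
    unfolding continuous_on_iff using \<rho> by (metis centre_in_ball zero_less_one)
  define \<delta> where "\<delta> = min \<delta>0 \<rho>"
  have \<delta>: "\<delta> > 0" using \<delta>0 \<rho> by (simp add: \<delta>_def)
  have himg: "h ` ball 0 \<delta> \<subseteq> ball 0 1"
  proof
    fix w assume "w \<in> h ` ball 0 \<delta>"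
    then obtain x where x: "x \<in> ball 0 \<delta>" "w = h x" by blast
    then have "dist (h x) (h 0) < 1" using \<delta>0 by (auto simp: \<delta>_def dist_norm)
    then show "w \<in> ball 0 1" using x by (simp add: h_def dist_norm)
  qed
  define H where "H = ZgC P \<nu> G \<circ> h"
  have holH: "H holomorphic_on ball 0 \<delta>" unfolding H_def
    by (rule holomorphic_on_compose_gen[OF _ ZgC_holo[OF nu] himg])
       (rule holomorphic_on_subset[OF holh], auto simp: \<delta>_def)
  define C where "C = (\<lambda>k. (deriv ^^ k) H 0 / fact k)"
  have ps: "(\<lambda>k. C k * e^k) sums H e" if "e \<in> ball 0 \<delta>" for e
    using holomorphic_power_series[OF holH that] by (simp add: C_def)
  have C0: "C 0 = 0" by (simp add: C_def H_def h_def ZgC_def)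
  define \<kappa> where "\<kappa> = (cnu \<nu> * \<gamma>) powr (-1/real \<nu>)"
  have \<kappa>: "\<kappa> > 0" using cnu_pos[of \<nu>] gp by (simp add: \<kappa>_def)
  define \<epsilon> where "\<epsilon> = (\<lambda>n. \<kappa> * tt \<nu> n ^ (\<nu> - 1))"
  have "\<epsilon> \<longlonglongrightarrow> \<kappa> * 0 ^ (\<nu> - 1)" unfolding \<epsilon>_def
    using nu by (intro tendsto_intros tt_tendsto) auto
  moreover have "(0::real) ^ (\<nu> - 1) = 0" using nu by (simp add: zero_power)
  ultimately have "\<epsilon> \<longlonglongrightarrow> 0" by (metis mult_zero_right)
  then have "eventually (\<lambda>n. \<epsilon> n < min r \<delta>) sequentially"
    using r \<delta> by (intro order_tendstoD(2)) auto
  then obtain N0 where N0: "\<forall>n\<ge>N0. \<epsilon> n < min r \<delta>" by (auto simp: eventually_sequentially)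
  define a where "a = (\<lambda>i. if (\<nu> - 1) dvd i then Re (C (i div (\<nu> - 1))) * \<kappa> ^ (i div (\<nu> - 1)) else 0)"
  have nu1: "\<nu> - 1 > 0" using nu by simp
  show ?thesis
  proof (intro exI conjI allI impI)
    fix i assume i: "i < \<nu> - 1"
    show "a i = 0"
    proof (cases "(\<nu> - 1) dvd i")
      case True
      then have "i = 0" using i by (metis dvd_imp_le not_gr0 not_le)
      then show ?thesis by (simp add: a_def C0)
    qed (simp add: a_def)
  next
    fix n assume n: "n \<ge> max N0 1"
    have n0: "n > 0" using n by simp
    define y where "y = \<gamma> * real n ^ (\<nu> - 1)"
    have y: "y > 0" using gp n0 by (simp add: y_def)
    define Z where "Z = Z0 \<nu> y"
    have Z: "0 < Z" "Z \<le> 1" "1 = Z + cnu \<nu> * y * Z ^ \<nu>"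
      using Z0_prop[of \<nu> y] nu y by (auto simp: Z_def)
    define t where "t = tt \<nu> n"
    have t: "t > 0" using tt_pos[OF n0] by (simp add: t_def)
    define e where "e = \<epsilon> n"
    have e: "0 < e" "e < r" "e < \<delta>" using N0 n \<kappa> t by (auto simp: e_def \<epsilon>_def t_def)
    have key: "cnu \<nu> * y * e ^ \<nu> = 1"
      using eps_identity[OF nu gp n0] by (simp add: y_def e_def \<epsilon>_def \<kappa>_def)
    define W where "W = Z / e"
    have ZW: "Z = e * W" using e by (simp add: W_def)
    have W0: "W > 0" using Z e by (simp add: W_def)
    have Weq: "W ^ \<nu> = 1 - e * W"
    proof -
      have "cnu \<nu> * y * Z ^ \<nu> = cnu \<nu> * y * e ^ \<nu> * W ^ \<nu>" by (simp add: ZW power_mult_distrib)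
      then show ?thesis using Z(3) key ZW by simp
    qed
    have W1: "W < 1"
    proof (rule ccontr)
      assume "\<not> W < 1"
      then have "1 \<le> W ^ \<nu>" by simp
      moreover have "e * W > 0" using e W0 by simp
      ultimately show False using Weq by simp
    qed
    have "W ^ \<nu> \<le> W ^ 1" using W0 W1 nu by (intro power_decreasing) auto
    then have W2: "1 - e \<le> W" using Weq e W1 W0
      by (smt (verit) mult_left_le power_one_right)
    have Wb: "complex_of_real W \<in> ball 1 r"
    proof -
      have "1 - complex_of_real W = complex_of_real (1 - W)" by simp
      then have "cmod (1 - complex_of_real W) = \<bar>1 - W\<bar>" by (metis norm_of_real)
      then show ?thesis using W1 W2 e by (simp add: dist_norm)
    qed
    have "(1 - W ^ \<nu>) / W = e" using Weq W0 by simp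
    then have "(1 - (complex_of_real W) ^ \<nu>) / complex_of_real W = complex_of_real e"
      by (metis of_real_1 of_real_diff of_real_divide of_real_power)
    then have gW: "g (complex_of_real e) = complex_of_real W" using ginv[OF Wb] by simp
    have He: "H (complex_of_real e) = complex_of_real (Zg P \<nu> G y)"
    proof -
      have "h (complex_of_real e) = complex_of_real Z" by (simp add: h_def gW ZW)
      then show ?thesis by (simp add: H_def Z_def ZgC_real)
    qed
    have eb: "complex_of_real e \<in> ball 0 \<delta>" using e by simp
    have "(\<lambda>k. Re (C k * complex_of_real e ^ k)) sums Re (H (complex_of_real e))"
      by (rule sums_Re[OF ps[OF eb]])
    then have s1: "(\<lambda>k. Re (C k) * e ^ k) sums Zg P \<nu> G y"
      by (simp add: He flip: of_real_power)
    have "e ^ k = \<kappa> ^ k * t ^ (k * (\<nu> - 1))" for k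
      by (simp add: e_def \<epsilon>_def t_def power_mult_distrib flip: power_mult) (simp add: mult.commute)
    then have s2: "(\<lambda>k. a (k * (\<nu> - 1)) * t ^ (k * (\<nu> - 1))) sums Zg P \<nu> G y"
      using s1 nu1 by (simp add: a_def mult.assoc)
    have sm: "strict_mono (\<lambda>k::nat. k * (\<nu> - 1))"
      using nu1 by (intro strict_monoI) simp
    have "(\<lambda>i. a i * t ^ i) sums Zg P \<nu> G y"
    proof (subst sums_mono_reindex[OF sm, symmetric])
      show "a i * t ^ i = 0" if "i \<notin> range (\<lambda>k. k * (\<nu> - 1))" for i
      proof -
        have "\<not> (\<nu> - 1) dvd i"
        proof
          assume "(\<nu> - 1) dvd i"
          then have "i = (i div (\<nu> - 1)) * (\<nu> - 1)" by simp
          then show False using that by blast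
        qed
        then show ?thesis by (simp add: a_def)
      qed
      show "(\<lambda>k. a (k * (\<nu> - 1)) * t ^ (k * (\<nu> - 1))) sums Zg P \<nu> G y" by (rule s2)
    qed
    then show "(\<lambda>i. a i * real n powr (- (real i / real \<nu>))) sums Zg P \<nu> G (\<gamma> * real n ^ (\<nu> - 1))"
      using n0 by (simp add: powr_tt t_def y_def)
  qed
qed



lemma acoef_prop:
  assumes nu: "\<nu> \<ge> 2" and gp: "\<gamma> > 0"
  shows "(\<forall>i<\<nu> - 1. acoef P \<nu> G \<gamma> i = 0) \<and>
     (\<exists>n0. \<forall>n\<ge>n0. (\<lambda>i. acoef P \<nu> G \<gamma> i * real n powr (- (real i / real \<nu>))) sums Zg P \<nu> G (\<gamma> * real n ^ (\<nu> - 1)))"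
proof -
  obtain a where a: "\<forall>i<\<nu> - 1. a i = 0"
    and n0: "\<exists>n0. \<forall>n\<ge>n0. (\<lambda>i. a i * real n powr (- (real i / real \<nu>))) sums Zg P \<nu> G (\<gamma> * real n ^ (\<nu> - 1))"
    using coef_exist[OF nu gp] by blast
  then obtain n0 where "\<forall>n\<ge>n0. (\<lambda>i. a i * real n powr (- (real i / real \<nu>))) sums Zg P \<nu> G (\<gamma> * real n ^ (\<nu> - 1))" by blast
  moreover have "acoef P \<nu> G \<gamma> = a"
    using acoef_eq[of \<nu> a n0 P G \<gamma>] nu a calculation by simp
  ultimately show ?thesis using a by auto
qed

lemma acoef_bound:
  assumes nu: "\<nu> \<ge> 2" and gp: "\<gamma> > 0"
  shows "\<exists>C n2. \<forall>n\<ge>n2. \<bar>Zg P \<nu> G (\<gamma> * real n ^ (\<nu> - 1)) - (\<Sum>i\<le>D. acoef P \<nu> G \<gamma> i * tt \<nu> n ^ i)\<bar> \<le> C * tt \<nu> n ^ Suc D"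
proof -
  obtain n0 where "\<forall>n\<ge>n0. (\<lambda>i. acoef P \<nu> G \<gamma> i * real n powr (- (real i / real \<nu>))) sums Zg P \<nu> G (\<gamma> * real n ^ (\<nu> - 1))"
    using acoef_prop[OF nu gp] by blast
  then show ?thesis using nu by (intro coef_bound[where F = "\<lambda>n. Zg P \<nu> G (\<gamma> * real n ^ (\<nu> - 1))"]) auto
qed

lemma tt_pow_nu: "n > 0 \<Longrightarrow> \<nu> > 0 \<Longrightarrow> tt \<nu> n ^ \<nu> = 1 / real n"
  unfolding tt_def by (subst powr_power) (auto simp: powr_minus_divide)

lemma tt_le1: "n > 0 \<Longrightarrow> tt \<nu> n \<le> 1"
  unfolding tt_def using powr_mono2'[of "-1/real \<nu>" 1 "real n"] by simp

lemma sum_shift0: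
  fixes k D :: nat
  assumes "\<forall>i<k. f i = (0::real)"
  shows "(\<Sum>i = k..D. f i) = (\<Sum>i\<le>D. f i)"
  by (rule sum.mono_neutral_left) (use assms in \<open>auto simp: not_le\<close>)

theorem lemmaA4:
  fixes \<nu> :: nat and P :: "nat \<Rightarrow> real poly" and U :: "real set"
    and \<alpha> \<xi> :: real and d :: nat
  assumes "\<nu> \<ge> 2"
    and "\<forall>g\<ge>1. degree (P g) = 3*g - 2"
    and HG: "open U" "1 \<in> U"
      "\<forall>\<alpha>\<in>U. \<forall>m::nat. \<exists>K n0. \<forall>n::nat\<ge>n0. \<forall>r>0.
         \<bar>xrec \<nu> n (real n / \<alpha>) r - \<alpha> * (\<Sum>g\<le>m. Zg P \<nu> g (\<alpha>^(\<nu>-1) * r) / real n ^ (2*g))\<bar>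
           < K / real n ^ (2*m+2)"
    and "\<alpha> \<in> U" and "\<alpha> > 0" and "\<xi> > 0" and "d \<ge> \<nu> - 1"
  shows "\<exists>K n0. \<forall>n::nat\<ge>n0.
           \<bar>xrec \<nu> n (real n / \<alpha>) (real n ^ (\<nu>-1) / \<xi>) - Gpart P \<nu> \<alpha> (\<alpha>^(\<nu>-1) / \<xi>) d n\<bar>
             < K / real n powr ((real d + 1) / real \<nu>)"
proof -
  note nu = assms(1)
  define \<gamma> where "\<gamma> = \<alpha>^(\<nu>-1) / \<xi>"
  have gp: "\<gamma> > 0" using assms by (simp add: \<gamma>_def)
  define J where "J = (d + 1 - \<nu>) div (2*\<nu>)"
  define m where "m = d"
  have Jm: "J \<le> m" unfolding J_def m_def using div_le_dividend[of "d + 1 - \<nu>" "2*\<nu>"] nu by linarith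
  have J2: "2*G*\<nu> \<le> d" if "G \<le> J" for G
  proof -
    have "2*\<nu>*J \<le> d + 1 - \<nu>" unfolding J_def using times_div_less_eq_dividend[of "2*\<nu>" "d + 1 - \<nu>"] by simp
    moreover have "2*G*\<nu> \<le> 2*\<nu>*J" using that by simp
    ultimately show ?thesis using nu by linarith
  qed
  have J3: "d + 1 \<le> \<nu> - 1 + 2*G*\<nu>" if "J < G" for G
  proof -
    have "(d + 1 - \<nu>) div (2*\<nu>) < G" using that by (simp add: J_def)
    then have "d + 1 - \<nu> < G * (2*\<nu>)" using nu by (simp add: div_less_iff_less_mult)
    then show ?thesis using nu by (simp add: algebra_simps)
  qed
  obtain K n0 where K: "\<forall>n::nat\<ge>n0. \<forall>r>0.
         \<bar>xrec \<nu> n (real n / \<alpha>) r - \<alpha> * (\<Sum>g\<le>m. Zg P \<nu> g (\<alpha>^(\<nu>-1) * r) / real n ^ (2*g))\<bar>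
           < K / real n ^ (2*m+2)"
    using HG(3) assms(6) by blast
  define Dg where "Dg = (\<lambda>G. if G \<le> J then d - 2*G*\<nu> else \<nu> - 2)"
  have "\<forall>G. \<exists>C n2. \<forall>n\<ge>n2. \<bar>Zg P \<nu> G (\<gamma> * real n ^ (\<nu> - 1)) - (\<Sum>i\<le>Dg G. acoef P \<nu> G \<gamma> i * tt \<nu> n ^ i)\<bar> \<le> C * tt \<nu> n ^ Suc (Dg G)"
    using acoef_bound[OF nu gp] by blast
  then obtain Cf nf where Cf: "\<And>G n. n \<ge> nf G \<Longrightarrow> \<bar>Zg P \<nu> G (\<gamma> * real n ^ (\<nu> - 1)) - (\<Sum>i\<le>Dg G. acoef P \<nu> G \<gamma> i * tt \<nu> n ^ i)\<bar> \<le> Cf G * tt \<nu> n ^ Suc (Dg G)"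
    by metis
  have az: "\<forall>i<\<nu> - 1. acoef P \<nu> G \<gamma> i = 0" for G using acoef_prop[OF nu gp] by blast
  define K' where "K' = \<bar>K\<bar> + \<bar>\<alpha>\<bar> * (\<Sum>G\<le>m. \<bar>Cf G\<bar>)"
  define N where "N = max n0 1 + (\<Sum>G\<le>m. nf G)"
  show ?thesis
  proof (intro exI allI impI)
    fix n assume nN: "n \<ge> N"
    have npos: "n > 0" and nn0: "n \<ge> n0" using nN by (auto simp: N_def)
    have nfG: "n \<ge> nf G" if "G \<le> m" for G
    proof -
      have "nf G \<le> (\<Sum>G\<le>m. nf G)" using that by (intro member_le_sum) auto
      then show ?thesis using nN by (simp add: N_def)
    qed
    define t where "t = tt \<nu> n"
    have t: "0 < t" "t \<le> 1" using tt_pos[OF npos] tt_le1[OF npos] by (auto simp: t_def)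
    have tnu: "t ^ \<nu> = 1 / real n" using tt_pow_nu[OF npos] nu by (simp add: t_def)
    have inv_n: "1 / real n ^ j = t ^ (\<nu> * j)" for j
      by (simp add: power_mult tnu power_one_over)
    define T where "T = t ^ (d + 1)"
    have T0: "T \<ge> 0" using t by (simp add: T_def)
    have Tpow: "t ^ k \<le> T" if "d + 1 \<le> k" for k
      unfolding T_def using t that by (intro power_decreasing) auto
    have Tn: "K' / real n powr ((real d + 1) / real \<nu>) = K' * T"
    proof -
      have "real n powr (- (real (d+1) / real \<nu>)) = T" using powr_tt[OF npos, of "d+1" \<nu>] by (simp add: T_def t_def)
      then have "1 / real n powr ((real d + 1) / real \<nu>) = T" by (simp add: powr_minus_divide add.commute)
      moreover have "K' / real n powr ((real d + 1) / real \<nu>) = K' * (1 / real n powr ((real d + 1) / real \<nu>))" by simp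
      ultimately show ?thesis by simp
    qed
    define Zn where "Zn = (\<lambda>G. Zg P \<nu> G (\<gamma> * real n ^ (\<nu> - 1)))"
    define Pn where "Pn = (\<lambda>G. \<Sum>i\<le>d - 2*G*\<nu>. acoef P \<nu> G \<gamma> i * t ^ i)"
    have r: "real n ^ (\<nu> - 1) / \<xi> > 0" using npos assms by simp
    have arg: "\<alpha>^(\<nu>-1) * (real n ^ (\<nu> - 1) / \<xi>) = \<gamma> * real n ^ (\<nu> - 1)" by (simp add: \<gamma>_def)
    have H1: "\<bar>xrec \<nu> n (real n / \<alpha>) (real n ^ (\<nu>-1) / \<xi>) - \<alpha> * (\<Sum>G\<le>m. Zn G * t ^ (2*G*\<nu>))\<bar> < \<bar>K\<bar> * T"
    proof -
      have "(\<Sum>g\<le>m. Zg P \<nu> g (\<alpha>^(\<nu>-1) * (real n ^ (\<nu> - 1) / \<xi>)) / real n ^ (2*g)) = (\<Sum>G\<le>m. Zn G * t ^ (2*G*\<nu>))"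
      proof (rule sum.cong[OF refl])
        fix G
        have q: "1 / real n ^ (2*G) = t ^ (2*G*\<nu>)" using inv_n[of "2*G"] by (simp add: mult.commute)
        have z: "Zg P \<nu> G (\<alpha>^(\<nu>-1) * (real n ^ (\<nu> - 1) / \<xi>)) = Zn G" unfolding Zn_def arg ..
        show "Zg P \<nu> G (\<alpha>^(\<nu>-1) * (real n ^ (\<nu> - 1) / \<xi>)) / real n ^ (2*G) = Zn G * t ^ (2*G*\<nu>)"
          unfolding z q[symmetric] by simp
      qed
      moreover have "K / real n ^ (2*m+2) \<le> \<bar>K\<bar> * T"
      proof -
        have "K / real n ^ (2*m+2) = K * t ^ (\<nu> * (2*m+2))" by (subst inv_n[of "2*m+2", symmetric]) simp
        also have "\<dots> \<le> \<bar>K\<bar> * t ^ (\<nu> * (2*m+2))" using t by (intro mult_right_mono) auto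
        also have "\<dots> \<le> \<bar>K\<bar> * T"
        proof -
          have "1 * (2*m+2) \<le> \<nu> * (2*m+2)" using nu by (intro mult_right_mono) auto
          then have "d + 1 \<le> \<nu> * (2*m+2)" by (simp add: m_def)
          then show ?thesis by (intro mult_left_mono Tpow) auto
        qed
        finally show ?thesis .
      qed
      ultimately show ?thesis using K[rule_format, OF nn0 r] by simp
    qed
    have Gp: "Gpart P \<nu> \<alpha> \<gamma> d n = \<alpha> * (\<Sum>G\<le>J. Pn G * t ^ (2*G*\<nu>))"
      unfolding Gpart_def J_def[symmetric] atLeast0AtMost
    proof (intro arg_cong[where f = "\<lambda>x. \<alpha> * x"] sum.cong refl)
      fix G assume "G \<in> {..J}"
      have "(\<Sum>i = \<nu> - 1..d - 2 * G * \<nu>. acoef P \<nu> G \<gamma> i / real n powr (real (2 * G) + real i / real \<nu>))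
          = (\<Sum>i = \<nu> - 1..d - 2 * G * \<nu>. acoef P \<nu> G \<gamma> i * t ^ i * t ^ (2*G*\<nu>))"
      proof (rule sum.cong[OF refl])
        fix i
        have X: "real n powr (real (2 * G) + real i / real \<nu>) = real n ^ (2*G) * real n powr (real i / real \<nu>)"
          using npos powr_realpow[of "real n" "2*G"] by (simp add: powr_add)
        have Y: "1 / real n powr (real i / real \<nu>) = t ^ i"
          using powr_tt[OF npos, of i \<nu>] by (simp add: t_def powr_minus_divide)
        have A: "1 / real n ^ (2*G) = t ^ (2*G*\<nu>)" using inv_n[of "2*G"] by (simp add: mult.commute)
        have pos: "real n ^ (2*G) > 0" "real n powr (real i / real \<nu>) > 0" using npos by auto
        have e: "acoef P \<nu> G \<gamma> i / (real n ^ (2*G) * real n powr (real i / real \<nu>))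
            = acoef P \<nu> G \<gamma> i * (1 / real n powr (real i / real \<nu>)) * (1 / real n ^ (2*G))"
          using pos by (simp add: field_simps)
        show "acoef P \<nu> G \<gamma> i / real n powr (real (2 * G) + real i / real \<nu>) = acoef P \<nu> G \<gamma> i * t ^ i * t ^ (2*G*\<nu>)"
          unfolding X e Y A by (rule refl)
      qed
      also have "\<dots> = (\<Sum>i\<le>d - 2 * G * \<nu>. acoef P \<nu> G \<gamma> i * t ^ i * t ^ (2*G*\<nu>))"
        by (rule sum_shift0) (use az in simp)
      also have "\<dots> = Pn G * t ^ (2*G*\<nu>)" by (simp add: Pn_def sum_distrib_right)
      finally show "(\<Sum>i = \<nu> - 1..d - 2 * G * \<nu>. acoef P \<nu> G \<gamma> i / real n powr (real (2 * G) + real i / real \<nu>)) = Pn G * t ^ (2*G*\<nu>)" .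
    qed
    define E where "E = (\<lambda>G. (if G \<le> J then Zn G - Pn G else Zn G) * t ^ (2*G*\<nu>))"
    have diff: "(\<Sum>G\<le>m. Zn G * t ^ (2*G*\<nu>)) - (\<Sum>G\<le>J. Pn G * t ^ (2*G*\<nu>)) = (\<Sum>G\<le>m. E G)"
    proof -
      let ?Z = "\<lambda>G. Zn G * t ^ (2*G*\<nu>)"
      let ?Q = "\<lambda>G. Pn G * t ^ (2*G*\<nu>)"
      have s1: "(\<Sum>G\<le>m. E G) = (\<Sum>G\<le>m. ?Z G - (if G \<in> {..J} then ?Q G else 0))"
        by (rule sum.cong[OF refl]) (simp add: E_def left_diff_distrib)
      have s2: "(\<Sum>G\<le>m. ?Z G - (if G \<in> {..J} then ?Q G else 0)) = (\<Sum>G\<le>m. ?Z G) - (\<Sum>G\<in>{..m}. if G \<in> {..J} then ?Q G else 0)"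
        by (rule sum_subtractf)
      have s3: "(\<Sum>G\<in>{..m}. if G \<in> {..J} then ?Q G else 0) = (\<Sum>G\<in>{..m} \<inter> {..J}. ?Q G)"
        by (rule sum.inter_restrict[symmetric]) simp
      have s4: "{..m} \<inter> {..J} = {..J}" using Jm by auto
      show ?thesis by (simp only: s1 s2 s3 s4)
    qed
    have Eb: "\<bar>E G\<bar> \<le> \<bar>Cf G\<bar> * T" if G: "G \<le> m" for G
    proof (cases "G \<le> J")
      case True
      have B: "\<bar>Zn G - Pn G\<bar> \<le> Cf G * t ^ Suc (d - 2*G*\<nu>)"
        using Cf[OF nfG[OF G]] True by (simp add: Dg_def Zn_def Pn_def t_def)
      have "\<bar>E G\<bar> = \<bar>Zn G - Pn G\<bar> * t ^ (2*G*\<nu>)" using True t by (simp add: E_def abs_mult)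
      also have "\<dots> \<le> Cf G * t ^ Suc (d - 2*G*\<nu>) * t ^ (2*G*\<nu>)"
        using B t by (intro mult_right_mono) auto
      also have "\<dots> = Cf G * T" using J2[OF True]
        by (simp add: T_def mult.assoc flip: power_add)
      also have "\<dots> \<le> \<bar>Cf G\<bar> * T" using T0 by (intro mult_right_mono) auto
      finally show ?thesis .
    next
      case False
      have z: "(\<Sum>i\<le>\<nu> - 2. acoef P \<nu> G \<gamma> i * tt \<nu> n ^ i) = 0"
        using az[of G] nu by (intro sum.neutral) auto
      have B: "\<bar>Zn G\<bar> \<le> Cf G * t ^ (\<nu> - 1)"
        using Cf[OF nfG[OF G]] False z nu by (simp add: Dg_def Zn_def t_def Suc_diff_Suc numeral_2_eq_2)
      have "\<bar>E G\<bar> = \<bar>Zn G\<bar> * t ^ (2*G*\<nu>)" using False t by (simp add: E_def abs_mult)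
      also have "\<dots> \<le> \<bar>Cf G\<bar> * t ^ (\<nu> - 1) * t ^ (2*G*\<nu>)"
      proof -
        have "Cf G * t ^ (\<nu> - 1) \<le> \<bar>Cf G\<bar> * t ^ (\<nu> - 1)" using t by (intro mult_right_mono) auto
        then have "\<bar>Zn G\<bar> \<le> \<bar>Cf G\<bar> * t ^ (\<nu> - 1)" using B by linarith
        then show ?thesis using t by (intro mult_right_mono) auto
      qed
      also have "\<dots> = \<bar>Cf G\<bar> * t ^ (\<nu> - 1 + 2*G*\<nu>)" by (simp add: power_add)
      also have "\<dots> \<le> \<bar>Cf G\<bar> * T" using J3[of G] False by (intro mult_left_mono Tpow) auto
      finally show ?thesis .
    qed
    have "\<bar>\<alpha> * (\<Sum>G\<le>m. E G)\<bar> \<le> \<bar>\<alpha>\<bar> * ((\<Sum>G\<le>m. \<bar>Cf G\<bar>) * T)"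
    proof -
      have "\<bar>\<Sum>G\<le>m. E G\<bar> \<le> (\<Sum>G\<le>m. \<bar>E G\<bar>)" by (rule sum_abs)
      also have "\<dots> \<le> (\<Sum>G\<le>m. \<bar>Cf G\<bar> * T)" by (rule sum_mono) (use Eb in auto)
      finally show ?thesis by (simp add: abs_mult sum_distrib_right mult_left_mono)
    qed
    then have H2: "\<bar>\<alpha> * (\<Sum>G\<le>m. Zn G * t ^ (2*G*\<nu>)) - Gpart P \<nu> \<alpha> \<gamma> d n\<bar> \<le> \<bar>\<alpha>\<bar> * (\<Sum>G\<le>m. \<bar>Cf G\<bar>) * T"
      using diff by (simp add: Gp right_diff_distrib[symmetric] mult.assoc)
    have "\<bar>xrec \<nu> n (real n / \<alpha>) (real n ^ (\<nu>-1) / \<xi>) - Gpart P \<nu> \<alpha> \<gamma> d n\<bar> < \<bar>K\<bar> * T + \<bar>\<alpha>\<bar> * (\<Sum>G\<le>m. \<bar>Cf G\<bar>) * T"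
      using H1 H2 by linarith
    also have "\<dots> = K' * T" by (simp add: K'_def algebra_simps)
    also have "\<dots> = K' / real n powr ((real d + 1) / real \<nu>)" by (rule Tn[symmetric])
    finally show "\<bar>xrec \<nu> n (real n / \<alpha>) (real n ^ (\<nu>-1) / \<xi>) - Gpart P \<nu> \<alpha> (\<alpha>^(\<nu>-1) / \<xi>) d n\<bar> < K' / real n powr ((real d + 1) / real \<nu>)"
      by (simp add: \<gamma>_def)
  qed
qed

end
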